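(* Under the assumptions of the initial condition $p_0(X,n)=\rho_0(n)\sum_\nu\prod_{i=1}^n p_0^i(x_{\nu_i})$ (exactly $n$ targets, $\rho_0(n)=1$, pairwise distinct $p_0^i$), let the predicted pdf be $p_1^-(X,n)=\rho_0(n)\sum_\nu\prod_i p_1^{i-}(x_{\nu_i})$ with $p_1^{i-}(x)=\int p(x\mid x')p_0^i(x')dx'$, and let a measurement set $Z_1=\{z^1_1,\dots,z^1_m\}$ be received. Then the Bayes-updated MT pdf $p_1(X,n\mid Z_1)=\dfrac{p(Z_1\mid X,n)\,p_1^-(X,n)}{\sum_{q}\frac{1}{q!}\int p(Z_1\mid X',q)\,p_1^-(X',q)\,dX'}$ equals $$p_1(X,n\mid Z_1)=\sum_{\sigma^{(n)}}\omega_1^{\sigma^{(n)}}\sum_\nu\prod_{i=1}^n p_1^i\big(x_{\nu_i}\mid z^1_{\sigma^{(n)}_i}\big),$$ where the sum is over all data association hypotheses $\sigma^{(n)}$ for $n$ targets, $$p_1^i(x\mid z)=\begin{cases}\dfrac{p(z\mid x)p_1^{i-}(x)}{\int p(z\mid x')p_1^{i-}(x')dx'}, & z\neq\phi,\\ p_1^{i-}(x), & z=\phi,\end{cases}$$ $$\omega_1^{\sigma^{(n)}}=\frac{l_{\sigma^{(n)}}\,p(\sigma^{(n)}\mid n)\,\rho_0(n)}{\sum_{q}\sum_{\nu^{(q)}}l_{\nu^{(q)}}\,p(\nu^{(q)}\mid q)\,\rho_0(q)},\qquad l_{\sigma^{(n)}}=\frac{k!}{V^k}\prod_{i=1}^n\int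 p(z^1_{\sigma^{(n)}_i}\mid x)\,p_1^{i-}(x)\,dx,$$ with $k$ the number of measurements that $\sigma^{(n)}$ assigns to clutter (and the denominator sums over all cardinalities $q$ and all $q$-target data associations $\nu^{(q)}$).
   Context: A multi-target (MT) pdf is a function $p(X,n)$ of a cardinality $n$ and an unordered collection $X=\{x_1,\dots,x_n\}$ of points in $\mathbb{R}^d$; $\sum_\nu$ is the sum over all permutations $\nu$ of $\{1,\dots,n\}$; the integral over $n$-element collections is $\frac{1}{n!}\int\cdot\,dx_1\cdots dx_n$. Single-target transition density $p(x\mid x')$, single-target likelihood $p(z\mid x)$. Given measurements $Z=\{z_1,\dots,z_m\}$, a data association hypothesis for $n$ targets is $\sigma^{(n)}=(\sigma^{(n)}_1,\dots,\sigma^{(n)}_n)$ with $\sigma^{(n)}_i\in\{z_1,\dots,z_m,\phi\}$, each measurement assigned to at most one target ($\phi$ = missed detection); the $k$ measurements not assigned to any target are clutter, so $m-k$ targets are detected. Convention: $p(\phi\mid x)=1$. The MT likelihood is $p(Z\mid X,n)=\sum_{\sigma^{(n)}}p(Z\mid\sigma^{(n)},X,n)\,p(\sigma^{(n)}\mid n)$ with a priori probability $p(\sigma^{(n)}\mid n)=p_D^{m-k}(1-p_D)^{n-(m-k)}e^{-\lambda V}\frac{(\lambda V)^k}{k!}$ (detection probability $p_D$, Poisson clutter of rate $\lambda$ uniform on sensor volume $V$) and $p(Z\mid\sigma^{(n)},X,n)=\frac{k!}{V^k}\prod_{i=1}^n p(z_{\sigma^{(n)}_i}\mid x_i)$. 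*)

theory Defs
  imports "HOL-Analysis.Analysis" "HOL-Combinatorics.Permutations"
begin

text \<open>Targets live in a Euclidean space 'a (standing for R^d), measurements in
a Euclidean space 'b.  An n-element collection X = {x_1,...,x_n} is represented by a function
X :: nat \<Rightarrow> 'a, whose values at 0,...,n-1 are the points (indices shifted by one).
The measurement set Z = {z_1,...,z_m} is a function z :: nat \<Rightarrow> 'b on {..<m}.
A data association hypothesis for n targets is sigma :: nat \<Rightarrow> nat option:
sigma i = Some j means target i is assigned measurement z j, sigma i = None means phi
(missed detection); sigma is None outside {..<n}.\<close>

definition assoc :: "nat \<Rightarrow> nat \<Rightarrow> (nat \<Rightarrow> nat option) set" where
  "assoc n m = {\<sigma>. (\<forall>i. n \<le> i \<longrightarrow> \<sigma> i = None)
                  \<and> (\<forall>i<n. \<forall>j. \<sigma> i = Some j \<longrightarrow> j < m)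
                  \<and> (\<forall>i<n. \<forall>i'<n. \<sigma> i = \<sigma> i' \<and> \<sigma> i \<noteq> None \<longrightarrow> i = i')}"

definition ndet :: "nat \<Rightarrow> (nat \<Rightarrow> nat option) \<Rightarrow> nat" where
  "ndet n \<sigma> = card {i\<in>{..<n}. \<sigma> i \<noteq> None}"

definition nclutter :: "nat \<Rightarrow> nat \<Rightarrow> (nat \<Rightarrow> nat option) \<Rightarrow> nat" where
  "nclutter m n \<sigma> = m - ndet n \<sigma>"

definition prior_assoc :: "real \<Rightarrow> real \<Rightarrow> real \<Rightarrow> nat \<Rightarrow> nat \<Rightarrow> (nat \<Rightarrow> nat option) \<Rightarrow> real" where
  "prior_assoc pD lam V m n \<sigma> =
     pD ^ ndet n \<sigma> * (1 - pD) ^ (n - ndet n \<sigma>) * exp (- lam * V)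
       * (lam * V) ^ nclutter m n \<sigma> / fact (nclutter m n \<sigma>)"

definition meas_lik :: "('b \<Rightarrow> 'a \<Rightarrow> real) \<Rightarrow> (nat \<Rightarrow> 'b) \<Rightarrow> nat option \<Rightarrow> 'a \<Rightarrow> real" where
  "meas_lik g z oz x = (case oz of None \<Rightarrow> 1 | Some j \<Rightarrow> g (z j) x)"

definition assoc_lik :: "('b \<Rightarrow> 'a \<Rightarrow> real) \<Rightarrow> (nat \<Rightarrow> 'b) \<Rightarrow> real \<Rightarrow> nat \<Rightarrow> nat
     \<Rightarrow> (nat \<Rightarrow> nat option) \<Rightarrow> (nat \<Rightarrow> 'a) \<Rightarrow> real" where
  "assoc_lik g z V m n \<sigma> X =
     fact (nclutter m n \<sigma>) / V ^ nclutter m n \<sigma> * (\<Prod>i<n. meas_lik g z (\<sigma> i) (X i))"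

definition MT_lik :: "('b \<Rightarrow> 'a \<Rightarrow> real) \<Rightarrow> (nat \<Rightarrow> 'b) \<Rightarrow> real \<Rightarrow> real \<Rightarrow> real \<Rightarrow> nat
     \<Rightarrow> (nat \<Rightarrow> 'a) \<Rightarrow> nat \<Rightarrow> real" where
  "MT_lik g z pD lam V m X n =
     (\<Sum>\<sigma>\<in>assoc n m. assoc_lik g z V m n \<sigma> X * prior_assoc pD lam V m n \<sigma>)"

definition rho0 :: "nat \<Rightarrow> nat \<Rightarrow> real" where
  "rho0 N n = (if n = N then 1 else 0)"

definition MT_pdf :: "(nat \<Rightarrow> real) \<Rightarrow> (nat \<Rightarrow> 'a \<Rightarrow> real) \<Rightarrow> (nat \<Rightarrow> 'a) \<Rightarrow> nat \<Rightarrow> real" where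
  "MT_pdf \<rho> p X n = \<rho> n * (\<Sum>\<nu>\<in>{\<nu>. \<nu> permutes {..<n}}. \<Prod>i<n. p i (X (\<nu> i)))"

definition pred_single :: "('a::euclidean_space \<Rightarrow> 'a \<Rightarrow> real) \<Rightarrow> (nat \<Rightarrow> 'a \<Rightarrow> real) \<Rightarrow> nat \<Rightarrow> 'a \<Rightarrow> real" where
  "pred_single f p0 i x = (\<integral>x'. f x x' * p0 i x' \<partial>lborel)"

definition post_single :: "('b \<Rightarrow> 'a::euclidean_space \<Rightarrow> real) \<Rightarrow> (nat \<Rightarrow> 'b) \<Rightarrow> (nat \<Rightarrow> 'a \<Rightarrow> real)
     \<Rightarrow> nat \<Rightarrow> 'a \<Rightarrow> nat option \<Rightarrow> real" where
  "post_single g z pm i x oz = (case oz of None \<Rightarrow> pm i x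
     | Some j \<Rightarrow> g (z j) x * pm i x / (\<integral>x'. g (z j) x' * pm i x' \<partial>lborel))"

definition l_weight :: "('b \<Rightarrow> 'a::euclidean_space \<Rightarrow> real) \<Rightarrow> (nat \<Rightarrow> 'b) \<Rightarrow> (nat \<Rightarrow> 'a \<Rightarrow> real)
     \<Rightarrow> real \<Rightarrow> nat \<Rightarrow> nat \<Rightarrow> (nat \<Rightarrow> nat option) \<Rightarrow> real" where
  "l_weight g z pm V m n \<sigma> =
     fact (nclutter m n \<sigma>) / V ^ nclutter m n \<sigma>
       * (\<Prod>i<n. \<integral>x. meas_lik g z (\<sigma> i) x * pm i x \<partial>lborel)"

definition omega :: "('b \<Rightarrow> 'a::euclidean_space \<Rightarrow> real) \<Rightarrow> (nat \<Rightarrow> 'b) \<Rightarrow> (nat \<Rightarrow> 'a \<Rightarrow> real)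
     \<Rightarrow> (nat \<Rightarrow> real) \<Rightarrow> real \<Rightarrow> real \<Rightarrow> real \<Rightarrow> nat \<Rightarrow> nat \<Rightarrow> (nat \<Rightarrow> nat option) \<Rightarrow> real" where
  "omega g z pm \<rho> pD lam V m n \<sigma> =
     l_weight g z pm V m n \<sigma> * prior_assoc pD lam V m n \<sigma> * \<rho> n /
     (\<Sum>q. \<Sum>\<nu>\<in>assoc q m. l_weight g z pm V m q \<nu> * prior_assoc pD lam V m q \<nu> * \<rho> q)"

text \<open>Bayes update of an MT pdf p^- : integral over n-element collections is
  1/n! times the integral over (R^d)^n (product of Lebesgue measures)\<close>
definition bayes_update :: "((nat \<Rightarrow> 'a::euclidean_space) \<Rightarrow> nat \<Rightarrow> real) \<Rightarrow> ((nat \<Rightarrow> 'a) \<Rightarrow> nat \<Rightarrow> real)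
     \<Rightarrow> (nat \<Rightarrow> 'a) \<Rightarrow> nat \<Rightarrow> real" where
  "bayes_update L pminus X n =
     L X n * pminus X n /
     (\<Sum>q. 1 / fact q * (\<integral>X'. L X' q * pminus X' q \<partial>(PiM {..<q} (\<lambda>_. lborel))))"

end

theory Submission
  imports Defs
begin

lemma pm_props:
  fixes f :: "'a::euclidean_space \<Rightarrow> 'a \<Rightarrow> real" and p :: "'a \<Rightarrow> real"
  assumes f_meas: "(\<lambda>(x, x'). f x x') \<in> borel_measurable (lborel \<Otimes>\<^sub>M lborel)"
    and f_nonneg: "\<And>x x'. 0 \<le> f x x'"
    and f_int: "\<And>x'. integrable lborel (\<lambda>x. f x x')"
    and f_norm: "\<And>x'. (\<integral>x. f x x' \<partial>lborel) = 1"
    and p_meas: "p \<in> borel_measurable lborel"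
    and p_nonneg: "\<And>x. 0 \<le> p x"
    and p_int: "integrable lborel p"
    and p_norm: "(\<integral>x. p x \<partial>lborel) = 1"
  shows "integrable lborel (\<lambda>x. \<integral>x'. f x x' * p x' \<partial>lborel)"
    and "(\<integral>x. (\<integral>x'. f x x' * p x' \<partial>lborel) \<partial>lborel) = 1"
    and "\<And>x. 0 \<le> (\<integral>x'. f x x' * p x' \<partial>lborel)"
proof -

  have M: "(\<lambda>(x, x'). f x x' * p x') \<in> borel_measurable (lborel \<Otimes>\<^sub>M lborel)"
  proof -
    have "(\<lambda>q. p (snd q)) \<in> borel_measurable (lborel \<Otimes>\<^sub>M (lborel::'a measure))"
      using p_meas by measurable
    with f_meas have "(\<lambda>q. (\<lambda>(x, x'). f x x') q * p (snd q)) \<in> borel_measurable (lborel \<Otimes>\<^sub>M lborel)"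
      by (intro borel_measurable_times)
    then show ?thesis by (simp add: case_prod_beta)
  qed
  have inner: "(\<integral>\<^sup>+x. ennreal (f x x' * p x') \<partial>lborel) = ennreal (p x')" for x'
  proof -
    have "(\<integral>\<^sup>+x. ennreal (f x x' * p x') \<partial>lborel) = ennreal (\<integral>x. f x x' * p x' \<partial>lborel)"
      by (rule nn_integral_eq_integral) (auto intro: f_int integrable_mult_left simp: f_nonneg p_nonneg)
    also have "\<dots> = ennreal (p x')" using f_norm[of x'] by simp
    finally show ?thesis .
  qed
  have "integral\<^sup>N (lborel \<Otimes>\<^sub>M lborel) (\<lambda>q. ennreal ((\<lambda>(x, x'). f x x' * p x') q))
        = (\<integral>\<^sup>+x'. \<integral>\<^sup>+x. ennreal (f x x' * p x') \<partial>lborel \<partial>lborel)"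
    using M by (subst lborel_pair.nn_integral_snd[symmetric]) (auto simp: case_prod_beta)
  also have "\<dots> = (\<integral>\<^sup>+x'. ennreal (p x') \<partial>lborel)" by (simp add: inner)
  also have "\<dots> = ennreal 1"
    using p_norm by (subst nn_integral_eq_integral) (auto simp: p_int p_nonneg)
  finally have NN: "integral\<^sup>N (lborel \<Otimes>\<^sub>M lborel) (\<lambda>q. ennreal ((\<lambda>(x, x'). f x x' * p x') q)) = 1" by simp
  have I: "integrable (lborel \<Otimes>\<^sub>M lborel) (\<lambda>(x, x'). f x x' * p x')"
    by (rule integrableI_nonneg) (use M NN in \<open>auto simp: f_nonneg p_nonneg\<close>)
  show "integrable lborel (\<lambda>x. \<integral>x'. f x x' * p x' \<partial>lborel)"
    using lborel_pair.integrable_fst[OF I] .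
  have "(\<integral>x. (\<integral>x'. f x x' * p x' \<partial>lborel) \<partial>lborel) = (\<integral>x'. (\<integral>x. f x x' * p x' \<partial>lborel) \<partial>lborel)"
    using lborel_pair.Fubini_integral[OF I] by simp
  also have "\<dots> = (\<integral>x'. p x' \<partial>lborel)" using f_norm by simp
  finally show "(\<integral>x. (\<integral>x'. f x x' * p x' \<partial>lborel) \<partial>lborel) = 1" using p_norm by simp
  show "\<And>x. 0 \<le> (\<integral>x'. f x x' * p x' \<partial>lborel)"
    by (rule integral_nonneg_AE) (auto simp: f_nonneg p_nonneg)
qed

lemma assoc_perm:
  assumes nu: "\<nu> permutes {..<n}" and s: "\<sigma> \<in> assoc n m"
  shows "\<sigma> \<circ> \<nu> \<in> assoc n m"
proof -
  have out: "\<nu> i = i" if "n \<le> i" for i using permutes_not_in[OF nu] that by auto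
  have inn: "\<nu> i < n" if "i < n" for i using permutes_in_image[OF nu, of i] that by auto
  have inj: "inj \<nu>" using permutes_inj[OF nu] .
  have A0: "(\<forall>i. n \<le> i \<longrightarrow> \<sigma> i = None) \<and> (\<forall>i<n. \<forall>j. \<sigma> i = Some j \<longrightarrow> j < m)
     \<and> (\<forall>i<n. \<forall>i'<n. \<sigma> i = \<sigma> i' \<and> \<sigma> i \<noteq> None \<longrightarrow> i = i')"
    using s unfolding assoc_def mem_Collect_eq .
  note A = A0[THEN conjunct1] A0[THEN conjunct2, THEN conjunct1] A0[THEN conjunct2, THEN conjunct2]
  have B1: "\<forall>i. n \<le> i \<longrightarrow> (\<sigma> \<circ> \<nu>) i = None" using A(1) out by simp
  have B2: "\<forall>i<n. \<forall>j. (\<sigma> \<circ> \<nu>) i = Some j \<longrightarrow> j < m" using A(2) inn by (simp add: o_def) blast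
  have B3: "\<forall>i<n. \<forall>i'<n. (\<sigma> \<circ> \<nu>) i = (\<sigma> \<circ> \<nu>) i' \<and> (\<sigma> \<circ> \<nu>) i \<noteq> None \<longrightarrow> i = i'"
  proof (intro allI impI)
    fix i i' assume "i < n" "i' < n" "(\<sigma> \<circ> \<nu>) i = (\<sigma> \<circ> \<nu>) i' \<and> (\<sigma> \<circ> \<nu>) i \<noteq> None"
    then have "\<nu> i = \<nu> i'" using A(3) inn[of i] inn[of i'] \<open>i < n\<close> \<open>i' < n\<close> by (simp add: o_def) blast
    then show "i = i'" using inj by (simp add: inj_eq)
  qed
  show ?thesis unfolding assoc_def using B1 B2 B3 by blast
qed

lemma ndet_perm:
  assumes nu: "\<nu> permutes {..<n}"
  shows "ndet n (\<sigma> \<circ> \<nu>) = ndet n \<sigma>"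
proof -
  have "{i\<in>{..<n}. \<sigma> i \<noteq> None} = \<nu> ` {i\<in>{..<n}. (\<sigma> \<circ> \<nu>) i \<noteq> None}"
  proof -
    have "\<nu> ` {i\<in>{..<n}. \<sigma> (\<nu> i) \<noteq> None} = {j \<in> \<nu> ` {..<n}. \<sigma> j \<noteq> None}" by auto
    also have "\<nu> ` {..<n} = {..<n}" using permutes_image[OF nu] .
    finally show ?thesis by simp
  qed
  moreover have "inj \<nu>" using permutes_inj[OF nu] .
  ultimately show ?thesis unfolding ndet_def
    by (simp add: card_image inj_on_subset)
qed

lemma bij_assoc:
  assumes nu: "\<nu> permutes {..<n}"
  shows "bij_betw (\<lambda>\<sigma>. \<sigma> \<circ> \<nu>) (assoc n m) (assoc n m)"
proof (rule bij_betw_byWitness[where f' = "\<lambda>\<sigma>. \<sigma> \<circ> inv \<nu>"])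
  have inu: "inv \<nu> permutes {..<n}" using permutes_inv[OF nu] .
  show "\<forall>a\<in>assoc n m. a \<circ> \<nu> \<circ> inv \<nu> = a"
    using permutes_inverses[OF nu] by (auto simp: fun_eq_iff)
  show "\<forall>a\<in>assoc n m. a \<circ> inv \<nu> \<circ> \<nu> = a"
    using permutes_inverses[OF nu] by (auto simp: fun_eq_iff)
  show "(\<lambda>\<sigma>. \<sigma> \<circ> \<nu>) ` assoc n m \<subseteq> assoc n m" using assoc_perm[OF nu] by auto
  show "(\<lambda>\<sigma>. \<sigma> \<circ> inv \<nu>) ` assoc n m \<subseteq> assoc n m" using assoc_perm[OF inu] by auto
qed

lemma finite_assoc: "finite (assoc n m)"
proof -
  have "assoc n m \<subseteq> {\<sigma>. \<forall>i. (i \<in> {..<n} \<longrightarrow> \<sigma> i \<in> insert None (Some ` {..<m})) \<and> (i \<notin> {..<n} \<longrightarrow> \<sigma> i = None)}"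
  proof
    fix \<sigma> assume s: "\<sigma> \<in> assoc n m"
    have s0: "(\<forall>i. n \<le> i \<longrightarrow> \<sigma> i = None) \<and> (\<forall>i<n. \<forall>j. \<sigma> i = Some j \<longrightarrow> j < m)
     \<and> (\<forall>i<n. \<forall>i'<n. \<sigma> i = \<sigma> i' \<and> \<sigma> i \<noteq> None \<longrightarrow> i = i')"
      using s unfolding assoc_def mem_Collect_eq .
    have a1: "\<forall>i. i \<notin> {..<n} \<longrightarrow> \<sigma> i = None" using s0 by simp
    have "\<sigma> i \<in> insert None (Some ` {..<m})" for i
    proof (cases "\<sigma> i")
      case None then show ?thesis by simp
    next
      case (Some j)
      then have "i < n" using a1 by (cases "i < n") auto
      then have "j < m" using s0 Some by blast
      then show ?thesis using Some by simp
    qed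
    then show "\<sigma> \<in> {\<sigma>. \<forall>i. (i \<in> {..<n} \<longrightarrow> \<sigma> i \<in> insert None (Some ` {..<m})) \<and> (i \<notin> {..<n} \<longrightarrow> \<sigma> i = None)}"
      using a1 by blast
  qed
  moreover have "finite {\<sigma>. \<forall>i. (i \<in> {..<n} \<longrightarrow> \<sigma> i \<in> insert None (Some ` {..<m})) \<and> (i \<notin> {..<n} \<longrightarrow> \<sigma> i = None)}"
    by (rule finite_set_of_finite_funs) simp_all
  ultimately show ?thesis by (rule finite_subset)
qed

lemma key_sum:
  fixes c :: "(nat \<Rightarrow> nat option) \<Rightarrow> real" and h :: "nat option \<Rightarrow> 'a \<Rightarrow> real"
    and q :: "nat \<Rightarrow> 'a \<Rightarrow> real"
  assumes cinv: "\<And>\<sigma> \<nu>. \<nu> permutes {..<n} \<Longrightarrow> \<sigma> \<in> assoc n m \<Longrightarrow> c (\<sigma> \<circ> \<nu>) = c \<sigma>"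
  shows "(\<Sum>\<sigma>\<in>assoc n m. c \<sigma> * (\<Prod>i<n. h (\<sigma> i) (X i))) * (\<Sum>\<nu>\<in>{\<nu>. \<nu> permutes {..<n}}. \<Prod>i<n. q i (X (\<nu> i)))
     = (\<Sum>\<sigma>\<in>assoc n m. c \<sigma> * (\<Sum>\<nu>\<in>{\<nu>. \<nu> permutes {..<n}}. \<Prod>i<n. h (\<sigma> i) (X (\<nu> i)) * q i (X (\<nu> i))))"
proof -
  have step: "(\<Sum>\<sigma>\<in>assoc n m. c \<sigma> * (\<Prod>i<n. h (\<sigma> i) (X i))) * (\<Prod>i<n. q i (X (\<nu> i)))
     = (\<Sum>\<sigma>\<in>assoc n m. c \<sigma> * (\<Prod>i<n. h (\<sigma> i) (X (\<nu> i)) * q i (X (\<nu> i))))"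
    if nu: "\<nu> permutes {..<n}" for \<nu>
  proof -
    have inu: "inv \<nu> permutes {..<n}" using permutes_inv[OF nu] .
    have "(\<Sum>\<sigma>\<in>assoc n m. c \<sigma> * (\<Prod>i<n. h (\<sigma> i) (X i)))
        = (\<Sum>\<sigma>\<in>assoc n m. c (\<sigma> \<circ> inv \<nu>) * (\<Prod>i<n. h ((\<sigma> \<circ> inv \<nu>) i) (X i)))"
      using sum.reindex_bij_betw[OF bij_assoc[OF inu, of m], of "\<lambda>\<sigma>. c \<sigma> * (\<Prod>i<n. h (\<sigma> i) (X i))"] by simp
    also have "\<dots> = (\<Sum>\<sigma>\<in>assoc n m. c \<sigma> * (\<Prod>i<n. h (\<sigma> i) (X (\<nu> i))))"
    proof (rule sum.cong[OF refl])
      fix \<sigma> assume s: "\<sigma> \<in> assoc n m"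
      have "(\<Prod>i<n. h ((\<sigma> \<circ> inv \<nu>) i) (X i)) = (\<Prod>i<n. h ((\<sigma> \<circ> inv \<nu>) (\<nu> i)) (X (\<nu> i)))"
        using prod.permute[OF nu, of "\<lambda>i. h ((\<sigma> \<circ> inv \<nu>) i) (X i)"] by (simp add: o_def)
      also have "\<dots> = (\<Prod>i<n. h (\<sigma> i) (X (\<nu> i)))"
        using permutes_inverses(2)[OF nu] by simp
      finally show "c (\<sigma> \<circ> inv \<nu>) * (\<Prod>i<n. h ((\<sigma> \<circ> inv \<nu>) i) (X i)) = c \<sigma> * (\<Prod>i<n. h (\<sigma> i) (X (\<nu> i)))"
        using cinv[OF inu s] by simp
    qed
    finally show ?thesis
      by (simp add: sum_distrib_right prod.distrib mult.assoc)
  qed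
  have "(\<Sum>\<sigma>\<in>assoc n m. c \<sigma> * (\<Prod>i<n. h (\<sigma> i) (X i))) * (\<Sum>\<nu>\<in>{\<nu>. \<nu> permutes {..<n}}. \<Prod>i<n. q i (X (\<nu> i)))
     = (\<Sum>\<nu>\<in>{\<nu>. \<nu> permutes {..<n}}. \<Sum>\<sigma>\<in>assoc n m. c \<sigma> * (\<Prod>i<n. h (\<sigma> i) (X (\<nu> i)) * q i (X (\<nu> i))))"
    by (simp add: sum_distrib_left step)
  also have "\<dots> = (\<Sum>\<sigma>\<in>assoc n m. \<Sum>\<nu>\<in>{\<nu>. \<nu> permutes {..<n}}. c \<sigma> * (\<Prod>i<n. h (\<sigma> i) (X (\<nu> i)) * q i (X (\<nu> i))))"
    by (rule sum.swap)
  finally show ?thesis by (simp add: sum_distrib_left)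
qed

lemma perm_integral:
  fixes k :: "nat \<Rightarrow> 'a::euclidean_space \<Rightarrow> real"
  assumes ki: "\<And>i. i < n \<Longrightarrow> integrable lborel (k i)"
    and k1: "\<And>i. i < n \<Longrightarrow> (\<integral>x. k i x \<partial>lborel) = 1"
  shows "integrable (PiM {..<n} (\<lambda>_. lborel)) (\<lambda>X. \<Sum>\<nu>\<in>{\<nu>. \<nu> permutes {..<n}}. \<Prod>i<n. k i (X (\<nu> i)))"
    and "(\<integral>X. (\<Sum>\<nu>\<in>{\<nu>. \<nu> permutes {..<n}}. \<Prod>i<n. k i (X (\<nu> i))) \<partial>PiM {..<n} (\<lambda>_. lborel)) = fact n"
proof -
  interpret product_sigma_finite "\<lambda>_. lborel :: 'a measure" by standard
  have re: "(\<Prod>i<n. k i (X (\<nu> i))) = (\<Prod>j<n. k (inv \<nu> j) (X j))" if nu: "\<nu> permutes {..<n}" for \<nu> X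
  proof -
    have inu: "inv \<nu> permutes {..<n}" using permutes_inv[OF nu] .
    show ?thesis
      using prod.permute[OF inu, of "\<lambda>i. k i (X (\<nu> i))"] permutes_inverses(1)[OF nu] by (simp add: o_def)
  qed
  have inr: "inv \<nu> j < n" if "\<nu> permutes {..<n}" "j < n" for \<nu> j
    using permutes_in_image[OF permutes_inv[OF that(1)]] that(2) by auto
  have I1: "integrable (PiM {..<n} (\<lambda>_. lborel)) (\<lambda>X. \<Prod>j<n. k (inv \<nu> j) (X j))"
    if nu: "\<nu> permutes {..<n}" for \<nu>
    by (rule product_integrable_prod) (auto intro: ki inr[OF nu])
  have I2: "(\<integral>X. (\<Prod>j<n. k (inv \<nu> j) (X j)) \<partial>PiM {..<n} (\<lambda>_. lborel)) = 1"
    if nu: "\<nu> permutes {..<n}" for \<nu>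
    by (subst product_integral_prod) (auto intro: ki inr[OF nu] simp: k1 inr[OF nu])
  have eq: "(\<lambda>X. \<Sum>\<nu>\<in>{\<nu>. \<nu> permutes {..<n}}. \<Prod>i<n. k i (X (\<nu> i)))
      = (\<lambda>X. \<Sum>\<nu>\<in>{\<nu>. \<nu> permutes {..<n}}. \<Prod>j<n. k (inv \<nu> j) (X j))"
    by (intro ext sum.cong) (auto simp: re)
  show "integrable (PiM {..<n} (\<lambda>_. lborel)) (\<lambda>X. \<Sum>\<nu>\<in>{\<nu>. \<nu> permutes {..<n}}. \<Prod>i<n. k i (X (\<nu> i)))"
    unfolding eq by (auto intro!: integrable_sum I1)
  have C: "card {\<nu>. \<nu> permutes {..<n}} = fact n" by (rule card_permutations) simp_all
  have "(\<integral>X. (\<Sum>\<nu>\<in>{\<nu>. \<nu> permutes {..<n}}. \<Prod>j<n. k (inv \<nu> j) (X j)) \<partial>PiM {..<n} (\<lambda>_. lborel))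
      = (\<Sum>\<nu>\<in>{\<nu>. \<nu> permutes {..<n}}. 1)"
    using Bochner_Integration.integral_sum[where I="{\<nu>. \<nu> permutes {..<n}}" and M="PiM {..<n} (\<lambda>_. lborel)" and f="\<lambda>\<nu> X. \<Prod>j<n. k (inv \<nu> j) (X j)"] I1 I2
    by simp
  also have "\<dots> = fact n" by (simp add: C)
  finally have R: "(\<integral>X. (\<Sum>\<nu>\<in>{\<nu>. \<nu> permutes {..<n}}. \<Prod>j<n. k (inv \<nu> j) (X j)) \<partial>PiM {..<n} (\<lambda>_. lborel)) = fact n" .
  show "(\<integral>X. (\<Sum>\<nu>\<in>{\<nu>. \<nu> permutes {..<n}}. \<Prod>i<n. k i (X (\<nu> i))) \<partial>PiM {..<n} (\<lambda>_. lborel)) = fact n"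
    by (subst eq) (rule R)
qed

theorem proposition2:
  fixes N m :: nat
    and p0 :: "nat \<Rightarrow> 'a::euclidean_space \<Rightarrow> real"
    and f :: "'a \<Rightarrow> 'a \<Rightarrow> real"
    and g :: "'b::euclidean_space \<Rightarrow> 'a \<Rightarrow> real"
    and z :: "nat \<Rightarrow> 'b"
    and pD lam V :: real
    and X :: "nat \<Rightarrow> 'a" and n :: nat
  assumes p0_meas: "\<And>i. i < N \<Longrightarrow> p0 i \<in> borel_measurable lborel"
    and p0_nonneg: "\<And>i x. i < N \<Longrightarrow> 0 \<le> p0 i x"
    and p0_int: "\<And>i. i < N \<Longrightarrow> integrable lborel (p0 i)"
    and p0_norm: "\<And>i. i < N \<Longrightarrow> (\<integral>x. p0 i x \<partial>lborel) = 1"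
    and p0_distinct: "\<And>i j. i < N \<Longrightarrow> j < N \<Longrightarrow> i \<noteq> j \<Longrightarrow> p0 i \<noteq> p0 j"
    and f_meas: "(\<lambda>(x, x'). f x x') \<in> borel_measurable (lborel \<Otimes>\<^sub>M lborel)"
    and f_nonneg: "\<And>x x'. 0 \<le> f x x'"
    and f_int: "\<And>x'. integrable lborel (\<lambda>x. f x x')"
    and f_norm: "\<And>x'. (\<integral>x. f x x' \<partial>lborel) = 1"
    and g_meas: "(\<lambda>(z, x). g z x) \<in> borel_measurable (lborel \<Otimes>\<^sub>M lborel)"
    and g_nonneg: "\<And>z x. 0 \<le> g z x"
    and g_int: "\<And>x. integrable lborel (\<lambda>z. g z x)"
    and g_norm: "\<And>x. (\<integral>z. g z x \<partial>lborel) = 1"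
    and z_distinct: "inj_on z {..<m}"
    and pD: "0 \<le> pD" "pD \<le> 1"
    and lam: "0 \<le> lam" and V: "0 < V"
    and upd_int: "\<And>i j. i < N \<Longrightarrow> j < m \<Longrightarrow>
        integrable lborel (\<lambda>x. g (z j) x * pred_single f p0 i x)"
    and upd_pos: "\<And>i j. i < N \<Longrightarrow> j < m \<Longrightarrow>
        (\<integral>x. g (z j) x * pred_single f p0 i x \<partial>lborel) \<noteq> 0"
  shows "bayes_update (MT_lik g z pD lam V m) (MT_pdf (rho0 N) (pred_single f p0)) X n
       = (\<Sum>\<sigma>\<in>assoc n m. omega g z (pred_single f p0) (rho0 N) pD lam V m n \<sigma>
            * (\<Sum>\<nu>\<in>{\<nu>. \<nu> permutes {..<n}}.
                 \<Prod>i<n. post_single g z (pred_single f p0) i (X (\<nu> i)) (\<sigma> i)))"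
proof -
  define pm where "pm = pred_single f p0"
  have pm_eq: "pm i x = (\<integral>x'. f x x' * p0 i x' \<partial>lborel)" for i x
    by (simp add: pm_def pred_single_def)
  have pm_int: "integrable lborel (pm i)" and pm_one: "(\<integral>x. pm i x \<partial>lborel) = 1"
    if "i < N" for i
  proof -
    note P = pm_props[OF f_meas f_nonneg f_int f_norm p0_meas[OF that] p0_nonneg[OF that] p0_int[OF that] p0_norm[OF that]]
    have e: "pm i = (\<lambda>x. \<integral>x'. f x x' * p0 i x' \<partial>lborel)" using pm_eq by (simp add: fun_eq_iff)
    show "integrable lborel (pm i)" unfolding e by (rule P(1))
    show "(\<integral>x. pm i x \<partial>lborel) = 1" using P(2) by (simp add: pm_eq)
  qed
  have upd_int': "integrable lborel (\<lambda>x. g (z j) x * pm i x)"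
    and upd_pos': "(\<integral>x. g (z j) x * pm i x \<partial>lborel) \<noteq> 0" if "i < N" "j < m" for i j
    using upd_int[OF that] upd_pos[OF that] by (simp_all add: pm_def)
  have assoc_some: "j < m" if "\<sigma> \<in> assoc N m" "i < N" "\<sigma> i = Some j" for \<sigma> i j
    using that unfolding assoc_def by blast
  define post where "post \<sigma> i x = post_single g z pm i x (\<sigma> i)" for \<sigma> i x
  define Lw where "Lw \<sigma> i = (\<integral>x. meas_lik g z (\<sigma> i) x * pm i x \<partial>lborel)" for \<sigma> i
  have post_int: "integrable lborel (post \<sigma> i)" and post_one: "(\<integral>x. post \<sigma> i x \<partial>lborel) = 1"
    if s: "\<sigma> \<in> assoc N m" and i: "i < N" for \<sigma> i
  proof -
    have "integrable lborel (post \<sigma> i) \<and> (\<integral>x. post \<sigma> i x \<partial>lborel) = 1"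
    proof (cases "\<sigma> i")
      case None
      then have "post \<sigma> i = pm i" by (simp add: post_def post_single_def fun_eq_iff)
      then show ?thesis using pm_int[OF i] pm_one[OF i] by simp
    next
      case (Some j)
      have j: "j < m" using assoc_some[OF s i Some] .
      have e: "post \<sigma> i = (\<lambda>x. g (z j) x * pm i x / (\<integral>x'. g (z j) x' * pm i x' \<partial>lborel))"
        using Some by (simp add: post_def post_single_def fun_eq_iff)
      show ?thesis unfolding e using upd_int'[OF i j] upd_pos'[OF i j] by simp
    qed
    then show "integrable lborel (post \<sigma> i)" "(\<integral>x. post \<sigma> i x \<partial>lborel) = 1" by auto
  qed
  have fac: "meas_lik g z (\<sigma> i) x * pm i x = post \<sigma> i x * Lw \<sigma> i"
    if s: "\<sigma> \<in> assoc N m" and i: "i < N" for \<sigma> i x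
  proof (cases "\<sigma> i")
    case None
    then show ?thesis using pm_one[OF i] by (simp add: post_def post_single_def Lw_def meas_lik_def)
  next
    case (Some j)
    have j: "j < m" using assoc_some[OF s i Some] .
    show ?thesis using Some upd_pos'[OF i j] by (simp add: post_def post_single_def Lw_def meas_lik_def)
  qed
  define S where "S \<sigma> X' = (\<Sum>\<nu>\<in>{\<nu>. \<nu> permutes {..<N}}. \<Prod>i<N. post \<sigma> i (X' (\<nu> i)))" for \<sigma> X'
  define w where "w \<sigma> = l_weight g z pm V m N \<sigma> * prior_assoc pD lam V m N \<sigma>" for \<sigma>
  define c where "c \<sigma> = fact (nclutter m N \<sigma>) / V ^ nclutter m N \<sigma> * prior_assoc pD lam V m N \<sigma>" for \<sigma>
  have cinv: "c (\<sigma> \<circ> \<nu>) = c \<sigma>" if "\<nu> permutes {..<N}" for \<sigma> \<nu>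
    unfolding c_def prior_assoc_def nclutter_def ndet_perm[OF that] ..
  have prodeq: "(\<Prod>i<N. meas_lik g z (\<sigma> i) (X' (\<nu> i)) * pm i (X' (\<nu> i)))
      = (\<Prod>i<N. post \<sigma> i (X' (\<nu> i))) * (\<Prod>i<N. Lw \<sigma> i)" if s: "\<sigma> \<in> assoc N m" for \<sigma> X' \<nu>
  proof -
    have "(\<Prod>i<N. meas_lik g z (\<sigma> i) (X' (\<nu> i)) * pm i (X' (\<nu> i))) = (\<Prod>i<N. post \<sigma> i (X' (\<nu> i)) * Lw \<sigma> i)"
      by (rule prod.cong[OF refl]) (simp add: fac[OF s])
    then show ?thesis by (simp add: prod.distrib)
  qed
  have wc: "w \<sigma> = c \<sigma> * (\<Prod>i<N. Lw \<sigma> i)" for \<sigma>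
    by (simp add: w_def c_def l_weight_def Lw_def)
  have numer: "MT_lik g z pD lam V m X' N * MT_pdf (rho0 N) pm X' N = (\<Sum>\<sigma>\<in>assoc N m. w \<sigma> * S \<sigma> X')" for X'
  proof -
    have "MT_lik g z pD lam V m X' N = (\<Sum>\<sigma>\<in>assoc N m. c \<sigma> * (\<Prod>i<N. meas_lik g z (\<sigma> i) (X' i)))"
      unfolding MT_lik_def assoc_lik_def c_def by (simp add: ac_simps)
    moreover have "MT_pdf (rho0 N) pm X' N = (\<Sum>\<nu>\<in>{\<nu>. \<nu> permutes {..<N}}. \<Prod>i<N. pm i (X' (\<nu> i)))"
      by (simp add: MT_pdf_def rho0_def)
    ultimately have "MT_lik g z pD lam V m X' N * MT_pdf (rho0 N) pm X' N
       = (\<Sum>\<sigma>\<in>assoc N m. c \<sigma> * (\<Sum>\<nu>\<in>{\<nu>. \<nu> permutes {..<N}}. \<Prod>i<N. meas_lik g z (\<sigma> i) (X' (\<nu> i)) * pm i (X' (\<nu> i))))"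
      using key_sum[of N m c "meas_lik g z" X' pm] cinv by simp
    also have "\<dots> = (\<Sum>\<sigma>\<in>assoc N m. w \<sigma> * S \<sigma> X')"
    proof (rule sum.cong[OF refl])
      fix \<sigma> assume s: "\<sigma> \<in> assoc N m"
      show "c \<sigma> * (\<Sum>\<nu>\<in>{\<nu>. \<nu> permutes {..<N}}. \<Prod>i<N. meas_lik g z (\<sigma> i) (X' (\<nu> i)) * pm i (X' (\<nu> i))) = w \<sigma> * S \<sigma> X'"
        unfolding prodeq[OF s] S_def wc by (simp add: sum_distrib_left sum_distrib_right ac_simps)
    qed
    finally show ?thesis .
  qed
  define D where "D = (\<Sum>\<sigma>\<in>assoc N m. w \<sigma>)"
  have S_int: "integrable (PiM {..<N} (\<lambda>_. lborel)) (S \<sigma>)" and S_one: "(\<integral>X'. S \<sigma> X' \<partial>PiM {..<N} (\<lambda>_. lborel)) = fact N"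
    if s: "\<sigma> \<in> assoc N m" for \<sigma>
  proof -
    have e: "S \<sigma> = (\<lambda>X'. \<Sum>\<nu>\<in>{\<nu>. \<nu> permutes {..<N}}. \<Prod>i<N. post \<sigma> i (X' (\<nu> i)))"
      by (simp add: S_def fun_eq_iff)
    note PI = perm_integral[of N "post \<sigma>", OF post_int[OF s] post_one[OF s]]
    show "integrable (PiM {..<N} (\<lambda>_. lborel)) (S \<sigma>)" unfolding e by (rule PI(1))
    show "(\<integral>X'. S \<sigma> X' \<partial>PiM {..<N} (\<lambda>_. lborel)) = fact N" unfolding e by (rule PI(2))
  qed
  have suminf_single: "suminf F = F N" if "\<And>q. q \<noteq> N \<Longrightarrow> F q = (0::real)" for F
  proof -
    have "(\<lambda>q. if q = N then F q else 0) = F" using that by (auto simp: fun_eq_iff)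
    then have "F sums F N" using sums_single[of N F] by simp
    then show ?thesis by (rule sums_unique[symmetric])
  qed
  have den1: "(\<Sum>q. 1 / fact q * (\<integral>X'. MT_lik g z pD lam V m X' q * MT_pdf (rho0 N) pm X' q \<partial>(PiM {..<q} (\<lambda>_. lborel)))) = D"
  proof -
    have "(\<Sum>q. 1 / fact q * (\<integral>X'. MT_lik g z pD lam V m X' q * MT_pdf (rho0 N) pm X' q \<partial>(PiM {..<q} (\<lambda>_. lborel))))
       = 1 / fact N * (\<integral>X'. MT_lik g z pD lam V m X' N * MT_pdf (rho0 N) pm X' N \<partial>(PiM {..<N} (\<lambda>_. lborel)))"
      by (rule suminf_single) (simp add: MT_pdf_def rho0_def)
    also have "(\<integral>X'. MT_lik g z pD lam V m X' N * MT_pdf (rho0 N) pm X' N \<partial>(PiM {..<N} (\<lambda>_. lborel)))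
       = (\<integral>X'. (\<Sum>\<sigma>\<in>assoc N m. w \<sigma> * S \<sigma> X') \<partial>(PiM {..<N} (\<lambda>_. lborel)))"
      by (simp add: numer)
    also have "\<dots> = (\<Sum>\<sigma>\<in>assoc N m. w \<sigma> * fact N)"
      using Bochner_Integration.integral_sum[where I="assoc N m" and M="PiM {..<N} (\<lambda>_. lborel)" and f="\<lambda>\<sigma> X'. w \<sigma> * S \<sigma> X'"]
        S_int S_one by simp
    finally show ?thesis by (simp add: D_def sum_distrib_right[symmetric])
  qed
  have den2: "(\<Sum>q. \<Sum>\<nu>\<in>assoc q m. l_weight g z pm V m q \<nu> * prior_assoc pD lam V m q \<nu> * rho0 N q) = D"
  proof -
    have "(\<Sum>q. \<Sum>\<nu>\<in>assoc q m. l_weight g z pm V m q \<nu> * prior_assoc pD lam V m q \<nu> * rho0 N q)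
       = (\<Sum>\<nu>\<in>assoc N m. l_weight g z pm V m N \<nu> * prior_assoc pD lam V m N \<nu> * rho0 N N)"
      by (rule suminf_single) (simp add: rho0_def)
    then show ?thesis by (simp add: D_def w_def rho0_def)
  qed
  show ?thesis
  proof (cases "n = N")
    case False
    then show ?thesis
      by (simp add: bayes_update_def MT_pdf_def omega_def rho0_def pm_def[symmetric])
  next
    case True
    have "bayes_update (MT_lik g z pD lam V m) (MT_pdf (rho0 N) pm) X N = (\<Sum>\<sigma>\<in>assoc N m. w \<sigma> * S \<sigma> X) / D"
      unfolding bayes_update_def den1 numer ..
    also have "\<dots> = (\<Sum>\<sigma>\<in>assoc N m. omega g z pm (rho0 N) pD lam V m N \<sigma> * S \<sigma> X)"
      unfolding omega_def den2 by (simp add: sum_divide_distrib w_def rho0_def)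
    finally show ?thesis using True by (simp add: pm_def S_def post_def)
  qed
qed

end
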